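(* Let $\hat A\neq0$ be a Hermitian operator on $L^2(\mathbb R)$ with bounded Fock support. The following are equivalent: (i) $\hat A$ is an eigenvector of $\mathcal V_t$ (i.e. $\mathcal V_t[\hat A]=\lambda\hat A$ for some $\lambda$) for some $t>1$; (ii) $\hat A$ is an eigenvector of $\mathcal V_t$ for all $t\ge1$; (iii) the Wigner function of $\hat A$ has the form $W_{\hat A}(\alpha)=H(\alpha,\alpha^* )e^{-2|\alpha|^2}$ where $H(\alpha,\alpha^* )=\sum_{a+b=m}p_{ab}\alpha^a\alpha^{*b}$ is a real-valued homogeneous polynomial of total degree $m$ in $\alpha,\alpha^*$. Moreover, the corresponding eigenvalue is $\sqrt t^{\,m}$.
   Context: Let $\hat a$ be the annihilation operator on $L^2(\mathbb R)$, $\hat n=\hat a^\dagger\hat a$, $\{|k\rangle\}$ the Fock basis, $\hat D(\alpha)=\exp(\alpha\hat a^\dagger-\alpha^*\hat a)$, and $W_{\hat A}(\alpha)=\frac2\pi\mathrm{Tr}[\hat A\hat D(\alpha)(-1)^{\hat n}\hat D(\alpha)^\dagger]$ the Wigner function. $\hat A$ has bounded Fock support if $\hat P_N\hat A\hat P_N=\hat A$ for some $N$, where $\hat P_N=\sum_{k=0}^N|k\rangle\langle k|$. For $t>0$, the Vertigo map on such operators is $\mathcal V_t[\hat A]=\sum_{k\ge0}\frac{(t-1)^k}{k!}t^{\hat n/2}\hat a^k\hat A\hat a^{\dagger k}t^{\hat n/2}$ (finite sum), equivalently characterized by $W_{\mathcal V_t[\hat A]}(\alpha)=W_{\hat A}(\sqrt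 t\alpha)e^{2(t-1)|\alpha|^2}$. *)

theory Defs
  imports "HOL-Analysis.Analysis"
begin

text \<open>Operators on L2(R) with bounded Fock support are represented by their
Fock-basis matrices A j k = <j|A|k>, a function nat => nat => complex.\<close>

definition bounded_fock_support :: "(nat \<Rightarrow> nat \<Rightarrow> complex) \<Rightarrow> bool" where
  "bounded_fock_support A \<longleftrightarrow> (\<exists>N. \<forall>j k. (N < j \<or> N < k) \<longrightarrow> A j k = 0)"

definition hermitian_op :: "(nat \<Rightarrow> nat \<Rightarrow> complex) \<Rightarrow> bool" where
  "hermitian_op A \<longleftrightarrow> (\<forall>j k. A j k = cnj (A k j))"

text \<open>Vertigo map: <j| V_t[A] |k> = t^((j+k)/2) * sum_l (t-1)^l/l! <j|a^l A a^dagger^l|k>,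
using <j| a^l = sqrt((j+l)!/j!) <j+l|. The sum has only finitely many nonzero terms.\<close>

definition vertigo :: "real \<Rightarrow> (nat \<Rightarrow> nat \<Rightarrow> complex) \<Rightarrow> (nat \<Rightarrow> nat \<Rightarrow> complex)" where
  "vertigo t A = (\<lambda>j k. complex_of_real (t powr ((real j + real k) / 2)) *
     (\<Sum>l. complex_of_real ((t - 1) ^ l / fact l *
        sqrt (fact (j + l) / fact j * (fact (k + l) / fact k))) * A (j + l) (k + l)))"

text \<open>Fock matrix elements <k|D(alpha)|j> of the displacement operator, from the
normal-ordered form D(alpha) = exp(-|alpha|^2/2) exp(alpha a^dagger) exp(-cnj alpha a).\<close>

definition disp_elem :: "complex \<Rightarrow> nat \<Rightarrow> nat \<Rightarrow> complex" where
  "disp_elem \<alpha> k j = complex_of_real (exp (- (cmod \<alpha>)\<^sup>2 / 2)) *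
     (\<Sum>i\<le>min j k. \<alpha> ^ (k - i) / fact (k - i) * complex_of_real (sqrt (fact k / fact i)) *
        ((- cnj \<alpha>) ^ (j - i) / fact (j - i)) * complex_of_real (sqrt (fact j / fact i)))"

text \<open>Wigner function W_A(alpha) = 2/pi Tr[A D(alpha) (-1)^n D(alpha)^dagger]
 = 2/pi Tr[A D(2 alpha) (-1)^n] = 2/pi sum_{j,k} A j k <k|D(2 alpha)|j> (-1)^j,
for A with bounded Fock support (the sum is then finite; we sum up to a support bound).\<close>

definition fock_bound :: "(nat \<Rightarrow> nat \<Rightarrow> complex) \<Rightarrow> nat" where
  "fock_bound A = (LEAST N. \<forall>j k. (N < j \<or> N < k) \<longrightarrow> A j k = 0)"

definition wigner :: "(nat \<Rightarrow> nat \<Rightarrow> complex) \<Rightarrow> complex \<Rightarrow> complex" where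
  "wigner A \<alpha> = complex_of_real (2 / pi) *
     (\<Sum>j\<le>fock_bound A. \<Sum>k\<le>fock_bound A. A j k * disp_elem (2 * \<alpha>) k j * (-1) ^ j)"

definition is_eigenvector_vertigo :: "real \<Rightarrow> (nat \<Rightarrow> nat \<Rightarrow> complex) \<Rightarrow> bool" where
  "is_eigenvector_vertigo t A \<longleftrightarrow> (\<exists>c::complex. vertigo t A = (\<lambda>j k. c * A j k))"

definition hom_poly :: "nat \<Rightarrow> (nat \<Rightarrow> nat \<Rightarrow> complex) \<Rightarrow> complex \<Rightarrow> complex" where
  "hom_poly m p \<alpha> = (\<Sum>a\<le>m. p a (m - a) * \<alpha> ^ a * cnj \<alpha> ^ (m - a))"

end

theory Submission
  imports Defs
begin
definition supp :: "nat \<Rightarrow> (nat \<Rightarrow> nat \<Rightarrow> complex) \<Rightarrow> bool" where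
  "supp N X \<longleftrightarrow> (\<forall>j k. (N < j \<or> N < k) \<longrightarrow> X j k = 0)"

definition sf :: "nat \<Rightarrow> nat \<Rightarrow> complex" where
  "sf j k = complex_of_real (sqrt (fact j * fact k))"

definition Cc :: "nat \<Rightarrow> (nat \<Rightarrow> nat \<Rightarrow> complex) \<Rightarrow> nat \<Rightarrow> nat \<Rightarrow> complex" where
  "Cc N X a b = (\<Sum>i\<le>N. complex_of_real ((-1) ^ i / fact i) * sf (a + i) (b + i) * X (b + i) (a + i))"

lemma sf_nz: "sf j k \<noteq> 0"
  unfolding sf_def by simp

lemma sf_sym: "sf j k = sf k j"
  unfolding sf_def by (simp add: mult.commute)

lemma D1:
  fixes g :: "nat \<Rightarrow> 'a::comm_monoid_add"
  assumes "\<And>j. j < i \<or> N < j \<Longrightarrow> g j = 0"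
  shows "(\<Sum>j\<le>N. g j) = (\<Sum>b\<le>N. g (b + i))"
proof -
  have "(\<Sum>j\<le>N. g j) = (\<Sum>j\<le>N + i. g j)"
    by (rule sum.mono_neutral_left) (auto simp: assms)
  also have "\<dots> = (\<Sum>j\<in>{i..N + i}. g j)"
    by (rule sum.mono_neutral_right) (auto simp: assms)
  also have "\<dots> = (\<Sum>j\<in>{0 + i..N + i}. g j)" by simp
  also have "\<dots> = (\<Sum>b\<in>{0..N}. g (b + i))"
    by (rule sum.shift_bounds_cl_nat_ivl)
  also have "\<dots> = (\<Sum>b\<le>N. g (b + i))" by (simp add: atLeast0AtMost)
  finally show ?thesis .
qed

lemma supp_fock: "bounded_fock_support A \<Longrightarrow> supp (fock_bound A) A"
  unfolding bounded_fock_support_def fock_bound_def supp_def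
  by (rule LeastI_ex)

lemma Cc_supp: "supp N X \<Longrightarrow> N < a \<or> N < b \<Longrightarrow> Cc N X a b = 0"
  unfolding Cc_def supp_def by (intro sum.neutral) auto

lemma Cc_lin: "Cc N (\<lambda>j k. X j k - c * Y j k) a b = Cc N X a b - c * Cc N Y a b"
  unfolding Cc_def by (simp add: sum_subtractf sum_distrib_left algebra_simps)

lemma Cc_inj:
  assumes "supp N X" "\<And>a b. Cc N X a b = 0"
  shows "X = (\<lambda>j k. 0)"
proof -
  have "\<forall>a b. N < a + n \<longrightarrow> X b a = 0" for n
  proof (induction n)
    case 0
    then show ?case using assms(1) unfolding supp_def by auto
  next
    case (Suc n)
    show ?case
    proof (intro allI impI)
      fix a b assume ab: "N < a + Suc n"
      have "0 = Cc N X a b" using assms(2) by simp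
      also have "\<dots> = complex_of_real ((-1) ^ 0 / fact 0) * sf (a + 0) (b + 0) * X (b + 0) (a + 0)
          + (\<Sum>i<N. complex_of_real ((-1) ^ Suc i / fact (Suc i)) * sf (a + Suc i) (b + Suc i) * X (b + Suc i) (a + Suc i))"
        unfolding Cc_def by (rule sum.atMost_shift)
      also have "(\<Sum>i<N. complex_of_real ((-1) ^ Suc i / fact (Suc i)) * sf (a + Suc i) (b + Suc i) * X (b + Suc i) (a + Suc i)) = 0"
        using Suc.IH ab by (intro sum.neutral) auto
      finally have "sf a b * X b a = 0" by simp
      then show "X b a = 0" using sf_nz by simp
    qed
  qed
  from this[of "Suc N"] show ?thesis by (auto intro!: ext)
qed

lemma vert_fin:
  assumes "supp N A"
  shows "vertigo t A j k = complex_of_real (t powr ((real j + real k) / 2)) *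
     (\<Sum>l\<le>N. complex_of_real ((t - 1) ^ l / fact l *
        sqrt (fact (j + l) / fact j * (fact (k + l) / fact k))) * A (j + l) (k + l))"
  unfolding vertigo_def
  by (subst suminf_finite[of "{..N}"]) (use assms in \<open>auto simp: supp_def\<close>)

lemma supp_vert: "supp N A \<Longrightarrow> supp N (vertigo t A)"
  unfolding supp_def using vert_fin[of N A t] by (auto simp: supp_def)

lemma sf_shift: "sf j k * complex_of_real (sqrt (fact (k + l) / fact k * (fact (j + l) / fact j))) = sf (j + l) (k + l)"
proof -
  have e: "fact j * fact k * (fact (k + l) / fact k * (fact (j + l) / fact j)) = (fact (j+l) * fact (k+l) :: real)"
    by (simp add: field_simps)
  have "sqrt (fact j * fact k) * sqrt (fact (k + l) / fact k * (fact (j + l) / fact j))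
     = sqrt (fact j * fact k * (fact (k + l) / fact k * (fact (j + l) / fact j)))"
    by (rule real_sqrt_mult[symmetric])
  also have "\<dots> = sqrt (fact (j+l) * fact (k+l))" by (simp only: e)
  finally show ?thesis unfolding sf_def by (metis of_real_mult)
qed

lemma CP:
  fixes c :: "nat \<Rightarrow> nat \<Rightarrow> complex"
  assumes "\<And>n. N < n \<Longrightarrow> E n = 0"
  shows "(\<Sum>i\<le>N. \<Sum>l\<le>N. c i l * E (l + i)) = (\<Sum>n\<le>N. (\<Sum>i\<le>n. c i (n - i)) * E n)"
proof -
  have "(\<Sum>i\<le>N. \<Sum>l\<le>N. c i l * E (l + i)) = (\<Sum>i\<le>N. \<Sum>n\<le>N. if i \<le> n then c i (n - i) * E n else 0)"
  proof (rule sum.cong[OF refl])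
    fix i assume "i \<in> {..N}"
    have "(\<Sum>n\<le>N. if i \<le> n then c i (n - i) * E n else 0) = (\<Sum>l\<le>N. if i \<le> l + i then c i (l + i - i) * E (l + i) else 0)"
      by (rule D1) (auto simp: assms)
    then show "(\<Sum>l\<le>N. c i l * E (l + i)) = (\<Sum>n\<le>N. if i \<le> n then c i (n - i) * E n else 0)" by simp
  qed
  also have "\<dots> = (\<Sum>n\<le>N. \<Sum>i\<le>N. if i \<le> n then c i (n - i) * E n else 0)"
    by (rule sum.swap)
  also have "\<dots> = (\<Sum>n\<le>N. (\<Sum>i\<le>n. c i (n - i)) * E n)"
  proof (rule sum.cong[OF refl])
    fix n assume n: "n \<in> {..N}"
    have "(\<Sum>i\<le>N. if i \<le> n then c i (n - i) * E n else 0) = (\<Sum>i\<in>{i\<in>{..N}. i \<le> n}. c i (n - i) * E n)"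
      by (rule sum.inter_filter[symmetric]) simp
    also have "{i\<in>{..N}. i \<le> n} = {..n}" using n by auto
    finally show "(\<Sum>i\<le>N. if i \<le> n then c i (n - i) * E n else 0) = (\<Sum>i\<le>n. c i (n - i)) * E n"
      by (simp add: sum_distrib_right)
  qed
  finally show ?thesis .
qed

lemma BN:
  fixes t :: real
  shows "(\<Sum>i\<le>n. (-1) ^ i / fact i * t ^ i * ((t - 1) ^ (n - i) / fact (n - i))) = (-1) ^ n / fact n"
proof -
  have "(-1 :: real) ^ n = (- t + (t - 1)) ^ n" by simp
  also have "\<dots> = (\<Sum>i\<le>n. of_nat (n choose i) * (- t) ^ i * (t - 1) ^ (n - i))"
    by (rule binomial_ring)
  also have "\<dots> = (\<Sum>i\<le>n. fact n * ((-1) ^ i / fact i * t ^ i * ((t - 1) ^ (n - i) / fact (n - i))))"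
  proof (rule sum.cong[OF refl])
    fix i assume "i \<in> {..n}"
    then have "i \<le> n" by simp
    then show "of_nat (n choose i) * (- t) ^ i * (t - 1) ^ (n - i) = fact n * ((-1) ^ i / fact i * t ^ i * ((t - 1) ^ (n - i) / fact (n - i)))"
    proof -
      have aux: "\<And>F f g s T U :: real. f \<noteq> 0 \<Longrightarrow> g \<noteq> 0 \<Longrightarrow> F / (f * g) * (s * T) * U = F * (s / f * T * (U / g))"
        by (simp add: field_simps)
      have "of_nat (n choose i) * (- t) ^ i * (t - 1) ^ (n - i) = fact n / (fact i * fact (n - i)) * ((-1) ^ i * t ^ i) * (t - 1) ^ (n - i)"
        using binomial_fact[where 'a=real, OF \<open>i \<le> n\<close>] power_minus[of t i] by simp
      also have "\<dots> = fact n * ((-1) ^ i / fact i * t ^ i * ((t - 1) ^ (n - i) / fact (n - i)))"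
        by (rule aux) auto
      finally show ?thesis .
    qed
  qed
  also have "\<dots> = fact n * (\<Sum>i\<le>n. (-1) ^ i / fact i * t ^ i * ((t - 1) ^ (n - i) / fact (n - i)))"
    by (simp add: sum_distrib_left)
  finally have "(-1) ^ n = fact n * (\<Sum>i\<le>n. (-1) ^ i / fact i * t ^ i * ((t - 1) ^ (n - i) / fact (n - i)))" .
  then show ?thesis by (simp add: field_simps)
qed

lemma powr_shift:
  fixes t :: real assumes "t > 0"
  shows "t powr ((real (b + i) + real (a + i)) / 2) = t powr ((real a + real b) / 2) * t ^ i"
proof -
  have h: "(real (b + i) + real (a + i)) / 2 = (real a + real b) / 2 + real i" by simp
  have "t powr ((real (b + i) + real (a + i)) / 2) = t powr ((real a + real b) / 2 + real i)" by (simp only: h)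
  also have "\<dots> = t powr ((real a + real b) / 2) * t ^ i" using assms by (simp add: powr_add powr_realpow)
  finally show ?thesis .
qed

lemma L1:
  fixes t :: real
  assumes "supp N A" "t > 0"
  shows "Cc N (vertigo t A) a b = complex_of_real (t powr ((real a + real b) / 2)) * Cc N A a b"
proof -
  define T where "T = complex_of_real (t powr ((real a + real b) / 2))"
  define c where "c = (\<lambda>i l. complex_of_real ((-1) ^ i / fact i * t ^ i * ((t - 1) ^ l / fact l)))"
  define E where "E = (\<lambda>n. sf (a + n) (b + n) * A (b + n) (a + n))"
  have E0: "\<And>n. N < n \<Longrightarrow> E n = 0" using assms(1) by (auto simp: E_def supp_def)
  have step: "complex_of_real ((-1) ^ i / fact i) * sf (a + i) (b + i) * vertigo t A (b + i) (a + i)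
      = T * (\<Sum>l\<le>N. c i l * E (l + i))" for i
  proof -
    have "complex_of_real ((-1) ^ i / fact i) * sf (a + i) (b + i) * vertigo t A (b + i) (a + i)
       = (\<Sum>l\<le>N. complex_of_real ((-1) ^ i / fact i) * complex_of_real (t powr ((real (b + i) + real (a + i)) / 2))
           * complex_of_real ((t - 1) ^ l / fact l) * (sf (a + i) (b + i) * complex_of_real (sqrt (fact (b + i + l) / fact (b + i) * (fact (a + i + l) / fact (a + i)))))
           * A (b + i + l) (a + i + l))"
      unfolding vert_fin[OF assms(1)] by (simp add: sum_distrib_left algebra_simps)
    also have "\<dots> = (\<Sum>l\<le>N. T * (c i l * E (l + i)))"
    proof (rule sum.cong[OF refl])
      fix l
      show "complex_of_real ((-1) ^ i / fact i) * complex_of_real (t powr ((real (b + i) + real (a + i)) / 2))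
           * complex_of_real ((t - 1) ^ l / fact l) * (sf (a + i) (b + i) * complex_of_real (sqrt (fact (b + i + l) / fact (b + i) * (fact (a + i + l) / fact (a + i)))))
           * A (b + i + l) (a + i + l) = T * (c i l * E (l + i))"
        unfolding sf_shift powr_shift[OF assms(2)] T_def c_def E_def
        by (simp add: algebra_simps)
    qed
    also have "\<dots> = T * (\<Sum>l\<le>N. c i l * E (l + i))" by (simp add: sum_distrib_left)
    finally show ?thesis .
  qed
  have "Cc N (vertigo t A) a b = T * (\<Sum>i\<le>N. \<Sum>l\<le>N. c i l * E (l + i))"
    unfolding Cc_def step by (simp add: sum_distrib_left)
  also have "\<dots> = T * (\<Sum>n\<le>N. (\<Sum>i\<le>n. c i (n - i)) * E n)"
    by (rule arg_cong[where f="\<lambda>x. T * x"], rule CP, rule E0)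
  also have "\<dots> = T * Cc N A a b"
  proof -
    have "(\<Sum>i\<le>n. c i (n - i)) = complex_of_real ((-1) ^ n / fact n)" for n
      unfolding c_def of_real_sum[symmetric] BN ..
    then show ?thesis unfolding Cc_def E_def by (simp add: mult.assoc)
  qed
  finally show ?thesis unfolding T_def .
qed

lemma Cc_scale: "Cc N (\<lambda>j k. c * X j k) a b = c * Cc N X a b"
  unfolding Cc_def by (simp add: sum_distrib_left algebra_simps)

lemma EIG1:
  assumes "supp N A" "t > 0"
    and "\<And>a b. complex_of_real (t powr ((real a + real b) / 2)) * Cc N A a b = c * Cc N A a b"
  shows "vertigo t A = (\<lambda>j k. c * A j k)"
proof -
  define D where "D = (\<lambda>j k. vertigo t A j k - c * A j k)"
  have "supp N D" using supp_vert[OF assms(1)] assms(1) unfolding D_def supp_def by auto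
  moreover have "Cc N D a b = 0" for a b
    unfolding D_def Cc_lin L1[OF assms(1,2)] assms(3) by simp
  ultimately have "D = (\<lambda>j k. 0)" by (rule Cc_inj)
  then show ?thesis unfolding D_def by (auto simp: fun_eq_iff)
qed

lemma EIG2:
  assumes "supp N A" "t > 0" "vertigo t A = (\<lambda>j k. c * A j k)"
  shows "complex_of_real (t powr ((real a + real b) / 2)) * Cc N A a b = c * Cc N A a b"
  using L1[OF assms(1,2), of a b] assms(3) Cc_scale by metis

definition homog :: "nat \<Rightarrow> (nat \<Rightarrow> nat \<Rightarrow> complex) \<Rightarrow> nat \<Rightarrow> bool" where
  "homog N A m \<longleftrightarrow> (\<forall>a b. Cc N A a b \<noteq> 0 \<longrightarrow> a + b = m)"

lemma powr_sqrt_pow: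
  fixes t :: real assumes "t > 0"
  shows "t powr (real m / 2) = sqrt t ^ m"
proof -
  have "sqrt t ^ m = (t powr (1/2)) ^ m" using assms by (simp add: powr_half_sqrt)
  also have "\<dots> = t powr (real m * (1/2))" using assms by (simp add: powr_power)
  finally show ?thesis by simp
qed

lemma H1:
  assumes "supp N A" "t > 0" "homog N A m"
  shows "vertigo t A = (\<lambda>j k. complex_of_real (sqrt t ^ m) * A j k)"
proof (rule EIG1[OF assms(1,2)])
  fix a b
  show "complex_of_real (t powr ((real a + real b) / 2)) * Cc N A a b = complex_of_real (sqrt t ^ m) * Cc N A a b"
  proof (cases "Cc N A a b = 0")
    case False
    then have "a + b = m" using assms(3) unfolding homog_def by blast
    then have "real a + real b = real m" by linarith
    then show ?thesis using powr_sqrt_pow[OF assms(2), of m] by simp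
  qed simp
qed

lemma H2:
  assumes "supp N A" "t > 1" "A \<noteq> (\<lambda>j k. 0)" "is_eigenvector_vertigo t A"
  shows "\<exists>m. homog N A m"
proof -
  obtain c where c: "vertigo t A = (\<lambda>j k. c * A j k)" using assms(4) unfolding is_eigenvector_vertigo_def by blast
  have t0: "t > 0" using assms(2) by simp
  obtain a0 b0 where nz: "Cc N A a0 b0 \<noteq> 0" using Cc_inj[OF assms(1)] assms(3) by blast
  have c0: "c = complex_of_real (t powr ((real a0 + real b0) / 2))"
    using EIG2[OF assms(1) t0 c, of a0 b0] nz by simp
  have "homog N A (a0 + b0)" unfolding homog_def
  proof (intro allI impI)
    fix a b assume "Cc N A a b \<noteq> 0"
    then have "complex_of_real (t powr ((real a + real b) / 2)) = c"
      using EIG2[OF assms(1) t0 c, of a b] by simp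
    then have "t powr ((real a + real b) / 2) = t powr ((real a0 + real b0) / 2)"
      unfolding c0 of_real_eq_iff .
    then have "(real a + real b) / 2 = (real a0 + real b0) / 2"
      using powr_inj[of t] assms(2) by simp
    then have "real (a + b) = real (a0 + b0)" by simp
    then show "a + b = a0 + b0" by (simp only: of_nat_eq_iff)
  qed
  then show ?thesis ..
qed

lemma sqrt_pair:
  "complex_of_real (sqrt (fact x / fact i)) * complex_of_real (sqrt (fact y / fact i))
   = sf x y / complex_of_real (fact i)"
proof -
  have "sqrt (fact x / fact i) * sqrt (fact y / fact i) = sqrt (fact x * fact y / (fact i * fact i))"
    by (simp only: real_sqrt_mult[symmetric] times_divide_times_eq)
  also have "\<dots> = sqrt (fact x * fact y) / sqrt (fact i * fact i)"
    by (rule real_sqrt_divide)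
  also have "sqrt (fact i * fact i) = (fact i :: real)"
    by (simp add: real_sqrt_mult_self)
  finally show ?thesis unfolding sf_def by (metis of_real_mult of_real_divide)
qed

lemma p1c: "(- cnj (2 * \<alpha>)) ^ b = (-1) ^ b * 2 ^ b * cnj \<alpha> ^ b"
proof -
  have "- cnj (2 * \<alpha>) = (-1) * 2 * cnj \<alpha>" by simp
  then show ?thesis by (simp only: power_mult_distrib)
qed
lemma m1: "(-1 :: complex) ^ b * (-1) ^ b = 1"
  by (metis power_mult_distrib mult_minus1 power_one minus_minus)
lemma p3: "(-1 :: complex) ^ (b + i) * (-1) ^ b = (-1) ^ i"
  by (metis m1 power_add mult.commute mult.left_commute mult_1_right)

lemma F_shift:
  fixes \<alpha> :: complex
  shows "A (b + i) (a + i) * (-1) ^ (b + i) * ((2 * \<alpha>) ^ a / fact a * complex_of_real (sqrt (fact (a + i) / fact i))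
        * ((- cnj (2 * \<alpha>)) ^ b / fact b) * complex_of_real (sqrt (fact (b + i) / fact i)))
   = complex_of_real (2 ^ (a + b) / (fact a * fact b)) *
       (complex_of_real ((-1) ^ i / fact i) * sf (a + i) (b + i) * A (b + i) (a + i)) * \<alpha> ^ a * cnj \<alpha> ^ b"
proof -
  note p1 = p1c[of \<alpha> b]
  have p2: "(2 * \<alpha>) ^ a = 2 ^ a * \<alpha> ^ a" by (simp add: power_mult_distrib)
  note p3 = p3[of b i]
  have "A (b + i) (a + i) * (-1) ^ (b + i) * ((2 * \<alpha>) ^ a / fact a * complex_of_real (sqrt (fact (a + i) / fact i))
        * ((- cnj (2 * \<alpha>)) ^ b / fact b) * complex_of_real (sqrt (fact (b + i) / fact i)))
     = A (b + i) (a + i) * ((-1) ^ (b + i) * (-1) ^ b) * (2 ^ a * 2 ^ b) / (fact a * fact b) * \<alpha> ^ a * cnj \<alpha> ^ b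
        * (complex_of_real (sqrt (fact (a + i) / fact i)) * complex_of_real (sqrt (fact (b + i) / fact i)))"
    unfolding p1 p2 by (simp add: field_simps)
  also have "\<dots> = A (b + i) (a + i) * (-1) ^ i * 2 ^ (a + b) / (fact a * fact b) * \<alpha> ^ a * cnj \<alpha> ^ b
        * (sf (a + i) (b + i) / fact i)"
    unfolding p3 sqrt_pair by (simp add: power_add)
  also have "\<dots> = complex_of_real (2 ^ (a + b) / (fact a * fact b)) *
       (complex_of_real ((-1) ^ i / fact i) * sf (a + i) (b + i) * A (b + i) (a + i)) * \<alpha> ^ a * cnj \<alpha> ^ b"
    by (simp add: field_simps)
  finally show ?thesis .
qed

lemma swap3:
  fixes G :: "nat \<Rightarrow> nat \<Rightarrow> nat \<Rightarrow> 'a::comm_monoid_add"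
  shows "(\<Sum>i\<le>N. \<Sum>b\<le>N. \<Sum>a\<le>N. G a b i) = (\<Sum>a\<le>N. \<Sum>b\<le>N. \<Sum>i\<le>N. G a b i)"
proof -
  have "(\<Sum>i\<le>N. \<Sum>b\<le>N. \<Sum>a\<le>N. G a b i) = (\<Sum>b\<le>N. \<Sum>i\<le>N. \<Sum>a\<le>N. G a b i)" by (rule sum.swap)
  also have "\<dots> = (\<Sum>b\<le>N. \<Sum>a\<le>N. \<Sum>i\<le>N. G a b i)" by (rule sum.cong[OF refl], rule sum.swap)
  also have "\<dots> = (\<Sum>a\<le>N. \<Sum>b\<le>N. \<Sum>i\<le>N. G a b i)" by (rule sum.swap)
  finally show ?thesis .
qed

lemma swap3b:
  fixes G :: "nat \<Rightarrow> nat \<Rightarrow> nat \<Rightarrow> 'a::comm_monoid_add"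
  shows "(\<Sum>j\<le>N. \<Sum>k\<le>N. \<Sum>i\<le>N. G j k i) = (\<Sum>i\<le>N. \<Sum>j\<le>N. \<Sum>k\<le>N. G j k i)"
proof -
  have "(\<Sum>j\<le>N. \<Sum>k\<le>N. \<Sum>i\<le>N. G j k i) = (\<Sum>j\<le>N. \<Sum>i\<le>N. \<Sum>k\<le>N. G j k i)" by (rule sum.cong[OF refl], rule sum.swap)
  also have "\<dots> = (\<Sum>i\<le>N. \<Sum>j\<le>N. \<Sum>k\<le>N. G j k i)" by (rule sum.swap)
  finally show ?thesis .
qed

lemma W:
  fixes \<alpha> :: complex
  assumes "supp N A"
  shows "(\<Sum>j\<le>N. \<Sum>k\<le>N. A j k * disp_elem (2 * \<alpha>) k j * (-1) ^ j)
    = complex_of_real (exp (-2 * (cmod \<alpha>)\<^sup>2)) *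
      (\<Sum>a\<le>N. \<Sum>b\<le>N. complex_of_real (2 ^ (a + b) / (fact a * fact b)) * Cc N A a b * \<alpha> ^ a * cnj \<alpha> ^ b)"
proof -
  define X where "X = complex_of_real (exp (-2 * (cmod \<alpha>)\<^sup>2))"
  define S where "S = (\<lambda>j k i. (2 * \<alpha>) ^ (k - i) / fact (k - i) * complex_of_real (sqrt (fact k / fact i)) *
        ((- cnj (2 * \<alpha>)) ^ (j - i) / fact (j - i)) * complex_of_real (sqrt (fact j / fact i)))"
  define F where "F = (\<lambda>j k i. if i \<le> j \<and> i \<le> k then A j k * (-1) ^ j * S j k i else 0)"
  define G where "G = (\<lambda>a b i. complex_of_real (2 ^ (a + b) / (fact a * fact b)) *
       (complex_of_real ((-1) ^ i / fact i) * sf (a + i) (b + i) * A (b + i) (a + i)) * \<alpha> ^ a * cnj \<alpha> ^ b)"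
  have AN: "\<And>j k. N < j \<or> N < k \<Longrightarrow> A j k = 0" using assms unfolding supp_def by blast
  have ex: "exp (- (cmod (2 * \<alpha>))\<^sup>2 / 2) = exp (-2 * (cmod \<alpha>)\<^sup>2)"
    by (simp add: norm_mult power_mult_distrib)
  have de: "disp_elem (2 * \<alpha>) k j = X * (\<Sum>i\<le>min j k. S j k i)" for j k
    unfolding disp_elem_def S_def X_def ex ..
  have s1: "A j k * disp_elem (2 * \<alpha>) k j * (-1) ^ j = X * (\<Sum>i\<le>N. F j k i)" if "j \<le> N" for j k
  proof -
    have "(\<Sum>i\<le>N. F j k i) = (\<Sum>i\<in>{i\<in>{..N}. i \<le> j \<and> i \<le> k}. A j k * (-1) ^ j * S j k i)"
      unfolding F_def by (rule sum.inter_filter[symmetric]) simp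
    also have "{i\<in>{..N}. i \<le> j \<and> i \<le> k} = {..min j k}" using that by auto
    finally have "(\<Sum>i\<le>N. F j k i) = A j k * (-1) ^ j * (\<Sum>i\<le>min j k. S j k i)"
      by (simp add: sum_distrib_left)
    then show ?thesis unfolding de by (simp add: algebra_simps)
  qed
  have "(\<Sum>j\<le>N. \<Sum>k\<le>N. A j k * disp_elem (2 * \<alpha>) k j * (-1) ^ j) = X * (\<Sum>j\<le>N. \<Sum>k\<le>N. \<Sum>i\<le>N. F j k i)"
    by (simp add: s1 sum_distrib_left)
  also have "\<dots> = X * (\<Sum>i\<le>N. \<Sum>j\<le>N. \<Sum>k\<le>N. F j k i)" by (rule arg_cong[where f="\<lambda>x. X * x"], rule swap3b)
  also have "\<dots> = X * (\<Sum>i\<le>N. \<Sum>b\<le>N. \<Sum>a\<le>N. G a b i)"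
  proof -
    have "(\<Sum>j\<le>N. \<Sum>k\<le>N. F j k i) = (\<Sum>b\<le>N. \<Sum>a\<le>N. G a b i)" for i
    proof -
      have "(\<Sum>j\<le>N. \<Sum>k\<le>N. F j k i) = (\<Sum>b\<le>N. \<Sum>k\<le>N. F (b + i) k i)"
        by (rule D1) (auto simp: F_def AN intro!: sum.neutral)
      also have "\<dots> = (\<Sum>b\<le>N. \<Sum>a\<le>N. F (b + i) (a + i) i)"
        by (rule sum.cong[OF refl], rule D1) (auto simp: F_def AN)
      also have "\<dots> = (\<Sum>b\<le>N. \<Sum>a\<le>N. G a b i)"
      proof (intro sum.cong refl)
        fix a b
        have "F (b + i) (a + i) i = A (b + i) (a + i) * (-1) ^ (b + i) * ((2 * \<alpha>) ^ a / fact a * complex_of_real (sqrt (fact (a + i) / fact i))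
        * ((- cnj (2 * \<alpha>)) ^ b / fact b) * complex_of_real (sqrt (fact (b + i) / fact i)))"
          unfolding F_def S_def by simp
        also have "\<dots> = G a b i" unfolding G_def by (rule F_shift)
        finally show "F (b + i) (a + i) i = G a b i" .
      qed
      finally show ?thesis .
    qed
    then show ?thesis by simp
  qed
  also have "\<dots> = X * (\<Sum>a\<le>N. \<Sum>b\<le>N. \<Sum>i\<le>N. G a b i)" by (rule arg_cong[where f="\<lambda>x. X * x"], rule swap3)
  also have "\<dots> = X * (\<Sum>a\<le>N. \<Sum>b\<le>N. complex_of_real (2 ^ (a + b) / (fact a * fact b)) * Cc N A a b * \<alpha> ^ a * cnj \<alpha> ^ b)"
    unfolding G_def Cc_def by (simp add: sum_distrib_left sum_distrib_right)
  finally show ?thesis unfolding X_def .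
qed

lemma inf_sphere: "\<not> finite (sphere (0::complex) 1)"
proof
  assume f: "finite (sphere (0::complex) 1)"
  have "DIM(complex) = 2" by (rule DIM_complex)
  then have "connected (sphere (0::complex) 1)" by (intro connected_sphere) simp
  then have "sphere (0::complex) 1 = {} \<or> (\<exists>c. sphere (0::complex) 1 = {c})"
    using f connected_finite_iff_sing by metis
  moreover have m1: "1 \<in> sphere (0::complex) 1" by simp
  moreover have m2: "-1 \<in> sphere (0::complex) 1" by simp
  ultimately obtain c where "sphere (0::complex) 1 = {c}" by blast
  then have "(1::complex) = c" "(-1::complex) = c" using m1 m2 by blast+
  then show False by simp
qed

lemma inf_reals: "\<not> finite (range complex_of_real)"
proof
  assume "finite (range complex_of_real)"
  then have "finite (UNIV :: real set)"
    using finite_imageD inj_of_real by blast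
  then show False using infinite_UNIV_char_0[where 'a=real] by blast
qed

lemma poly_zero_on:
  fixes c :: "nat \<Rightarrow> complex"
  assumes "\<not> finite S" "\<And>z. z \<in> S \<Longrightarrow> (\<Sum>i\<le>n. c i * z ^ i) = 0" "i \<le> n"
  shows "c i = 0"
proof (rule ccontr)
  assume "c i \<noteq> 0"
  then have "finite {z. (\<Sum>i\<le>n. c i * z ^ i) = 0}" using polyfun_finite_roots assms(3) by blast
  moreover have "S \<subseteq> {z. (\<Sum>i\<le>n. c i * z ^ i) = 0}" using assms(2) by auto
  ultimately show False using assms(1) finite_subset by blast
qed

lemma RG:
  fixes f :: "nat \<Rightarrow> nat \<Rightarrow> complex"
  shows "(\<Sum>a\<le>M. \<Sum>b\<le>M. f a b * x ^ (a + b)) = (\<Sum>n\<le>2 * M. (\<Sum>a\<le>M. \<Sum>b\<le>M. if a + b = n then f a b else 0) * x ^ n)"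
proof -
  have "(\<Sum>n\<le>2 * M. (\<Sum>a\<le>M. \<Sum>b\<le>M. if a + b = n then f a b else 0) * x ^ n)
      = (\<Sum>n\<le>2 * M. \<Sum>a\<le>M. \<Sum>b\<le>M. if a + b = n then f a b * x ^ n else 0)"
    by (simp only: sum_distrib_right) (intro sum.cong refl, simp)
  also have "\<dots> = (\<Sum>a\<le>M. \<Sum>n\<le>2 * M. \<Sum>b\<le>M. if a + b = n then f a b * x ^ n else 0)"
    by (rule sum.swap)
  also have "\<dots> = (\<Sum>a\<le>M. \<Sum>b\<le>M. \<Sum>n\<le>2 * M. if a + b = n then f a b * x ^ n else 0)"
    by (rule sum.cong[OF refl], rule sum.swap)
  also have "\<dots> = (\<Sum>a\<le>M. \<Sum>b\<le>M. f a b * x ^ (a + b))"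
  proof (intro sum.cong refl)
    fix a b assume "a \<in> {..M}" "b \<in> {..M}"
    then have "a + b \<in> {..2 * M}" by simp
    then show "(\<Sum>n\<le>2 * M. if a + b = n then f a b * x ^ n else 0) = f a b * x ^ (a + b)"
      by (simp only: sum.delta' if_True finite_atMost)
  qed
  finally show ?thesis by (rule sym)
qed

lemma L4:
  fixes d :: "nat \<Rightarrow> nat \<Rightarrow> complex"
  assumes H: "\<And>\<alpha>. (\<Sum>a\<le>M. \<Sum>b\<le>M. d a b * \<alpha> ^ a * cnj \<alpha> ^ b) = 0"
    and ab: "a \<le> M" "b \<le> M"
  shows "d a b = 0"
proof -
  define Q where "Q = (\<lambda>n \<omega>. (\<Sum>a\<le>M. \<Sum>b\<le>M. if a + b = n then d a b * \<omega> ^ a * cnj \<omega> ^ b else 0))"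
  have QA: "Q n \<omega> = 0" if "n \<le> 2 * M" for n \<omega>
  proof -
    have "\<And>z. z \<in> range complex_of_real \<Longrightarrow> (\<Sum>n\<le>2 * M. Q n \<omega> * z ^ n) = 0"
    proof -
      fix z :: complex assume "z \<in> range complex_of_real"
      then obtain x where x: "z = complex_of_real x" by blast
      have "0 = (\<Sum>a\<le>M. \<Sum>b\<le>M. d a b * (z * \<omega>) ^ a * cnj (z * \<omega>) ^ b)" by (rule H[symmetric])
      also have "\<dots> = (\<Sum>a\<le>M. \<Sum>b\<le>M. (d a b * \<omega> ^ a * cnj \<omega> ^ b) * z ^ (a + b))"
        using x by (simp only: complex_cnj_mult power_mult_distrib power_add complex_cnj_complex_of_real) (simp add: ac_simps)
      also have "\<dots> = (\<Sum>n\<le>2 * M. Q n \<omega> * z ^ n)"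
        unfolding Q_def by (rule RG)
      finally show "(\<Sum>n\<le>2 * M. Q n \<omega> * z ^ n) = 0" by (rule sym)
    qed
    from poly_zero_on[where S="range complex_of_real" and n="2 * M" and c="\<lambda>n. Q n \<omega>", OF inf_reals this that]
    show ?thesis .
  qed
  define n where "n = a + b"
  define e where "e = (\<lambda>a. if a \<le> n \<and> n - a \<le> M then d a (n - a) else 0)"
  have "\<And>z. z \<in> sphere 0 1 \<Longrightarrow> (\<Sum>i\<le>M. e i * z ^ i) = 0"
  proof -
    fix z :: complex assume "z \<in> sphere 0 1"
    then have nz: "norm z = 1" by simp
    define \<omega> where "\<omega> = csqrt z"
    have w1: "norm \<omega> = 1" unfolding \<omega>_def using nz by simp
    have w2: "\<omega> ^ 2 = z" unfolding \<omega>_def by simp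
    have wc: "\<omega> * cnj \<omega> = 1" using complex_norm_square[of \<omega>] w1 by simp
    have inner: "(\<Sum>b\<le>M. if a' + b = n then d a' b * \<omega> ^ a' * cnj \<omega> ^ b else 0)
        = (if a' \<le> n \<and> n - a' \<le> M then d a' (n - a') * \<omega> ^ a' * cnj \<omega> ^ (n - a') else 0)" for a'
    proof -
      have "(\<Sum>b\<le>M. if a' + b = n then d a' b * \<omega> ^ a' * cnj \<omega> ^ b else 0)
          = (\<Sum>b\<le>M. if a' \<le> n \<and> b = n - a' then d a' (n - a') * \<omega> ^ a' * cnj \<omega> ^ (n - a') else 0)"
        by (intro sum.cong refl) auto
      also have "\<dots> = (if a' \<le> n \<and> n - a' \<le> M then d a' (n - a') * \<omega> ^ a' * cnj \<omega> ^ (n - a') else 0)"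
        by (cases "a' \<le> n") auto
      finally show ?thesis .
    qed
    have pw: "\<omega> ^ n * (\<omega> ^ a' * cnj \<omega> ^ (n - a')) = z ^ a'" if "a' \<le> n" for a'
    proof -
      have "\<omega> ^ n = \<omega> ^ a' * \<omega> ^ (n - a')" using that by (simp flip: power_add)
      then have "\<omega> ^ n * (\<omega> ^ a' * cnj \<omega> ^ (n - a')) = \<omega> ^ a' * \<omega> ^ a' * (\<omega> * cnj \<omega>) ^ (n - a')"
        by (simp add: power_mult_distrib algebra_simps)
      also have "\<dots> = z ^ a'"
      proof -
        have "\<omega> ^ a' * \<omega> ^ a' = (\<omega> ^ 2) ^ a'" by (simp only: power2_eq_square power_mult_distrib)
        then show ?thesis using wc w2 by simp
      qed
      finally show ?thesis .
    qed
    have "0 = \<omega> ^ n * Q n \<omega>" using QA[of n \<omega>] ab unfolding n_def by simp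
    also have "\<dots> = (\<Sum>a'\<le>M. \<omega> ^ n * (if a' \<le> n \<and> n - a' \<le> M then d a' (n - a') * \<omega> ^ a' * cnj \<omega> ^ (n - a') else 0))"
      unfolding Q_def inner by (simp add: sum_distrib_left)
    also have "\<dots> = (\<Sum>i\<le>M. e i * z ^ i)"
    proof (intro sum.cong refl)
      fix a' show "\<omega> ^ n * (if a' \<le> n \<and> n - a' \<le> M then d a' (n - a') * \<omega> ^ a' * cnj \<omega> ^ (n - a') else 0) = e a' * z ^ a'"
        unfolding e_def using pw[of a'] by (auto simp: algebra_simps)
    qed
    finally show "(\<Sum>i\<le>M. e i * z ^ i) = 0" by simp
  qed
  from poly_zero_on[OF inf_sphere this ab(1)] have "e a = 0" .
  then show ?thesis unfolding e_def n_def using ab by simp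
qed

lemma R1:
  assumes "hermitian_op A"
  shows "cnj (Cc N A a b) = Cc N A b a"
proof -
  have h: "cnj (A (b + i) (a + i)) = A (a + i) (b + i)" for i
    using assms unfolding hermitian_op_def by metis
  have s: "cnj (sf j k) = sf j k" for j k unfolding sf_def by simp
  show ?thesis unfolding Cc_def
    by (simp add: h s sf_sym[of "a + _" "b + _"])
qed

definition DD :: "nat \<Rightarrow> (nat \<Rightarrow> nat \<Rightarrow> complex) \<Rightarrow> nat \<Rightarrow> nat \<Rightarrow> complex" where
  "DD N A a b = complex_of_real (2 / pi * 2 ^ (a + b) / (fact a * fact b)) * Cc N A a b"

definition PP :: "nat \<Rightarrow> (nat \<Rightarrow> nat \<Rightarrow> complex) \<Rightarrow> complex \<Rightarrow> complex" where
  "PP N A \<alpha> = (\<Sum>a\<le>N. \<Sum>b\<le>N. DD N A a b * \<alpha> ^ a * cnj \<alpha> ^ b)"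

lemma WF:
  assumes "bounded_fock_support A"
  shows "wigner A \<alpha> = complex_of_real (exp (-2 * (cmod \<alpha>)\<^sup>2)) * PP (fock_bound A) A \<alpha>"
proof -
  have s: "supp (fock_bound A) A" using supp_fock[OF assms] .
  show ?thesis
    unfolding wigner_def W[OF s] PP_def DD_def
    by (simp add: sum_distrib_left algebra_simps)
qed

lemma PP_real:
  assumes "hermitian_op A"
  shows "PP N A \<alpha> \<in> \<real>"
proof -
  have c: "cnj (DD N A a b) = DD N A b a" for a b
    unfolding DD_def using R1[OF assms] by (simp add: add.commute mult.commute)
  have "cnj (PP N A \<alpha>) = (\<Sum>a\<le>N. \<Sum>b\<le>N. DD N A b a * \<alpha> ^ b * cnj \<alpha> ^ a)"
    unfolding PP_def by (simp add: c mult_ac)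
  also have "\<dots> = PP N A \<alpha>" unfolding PP_def by (rule sum.swap)
  finally show ?thesis unfolding Reals_cnj_iff .
qed

lemma HP:
  assumes "m \<le> M"
  shows "hom_poly m p \<alpha> = (\<Sum>a\<le>M. \<Sum>b\<le>M. (if a + b = m then p a b else 0) * \<alpha> ^ a * cnj \<alpha> ^ b)"
proof -
  have inner: "(\<Sum>b\<le>M. (if a + b = m then p a b else 0) * \<alpha> ^ a * cnj \<alpha> ^ b)
     = (if a \<le> m then p a (m - a) * \<alpha> ^ a * cnj \<alpha> ^ (m - a) else 0)" for a
  proof -
    have "(\<Sum>b\<le>M. (if a + b = m then p a b else 0) * \<alpha> ^ a * cnj \<alpha> ^ b)
        = (\<Sum>b\<le>M. if b = m - a \<and> a \<le> m then p a (m - a) * \<alpha> ^ a * cnj \<alpha> ^ (m - a) else 0)"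
      by (intro sum.cong refl) auto
    also have "\<dots> = (if a \<le> m then p a (m - a) * \<alpha> ^ a * cnj \<alpha> ^ (m - a) else 0)"
      using assms by (cases "a \<le> m") auto
    finally show ?thesis .
  qed
  have "(\<Sum>a\<le>M. \<Sum>b\<le>M. (if a + b = m then p a b else 0) * \<alpha> ^ a * cnj \<alpha> ^ b)
      = (\<Sum>a\<le>M. if a \<le> m then p a (m - a) * \<alpha> ^ a * cnj \<alpha> ^ (m - a) else 0)"
    by (simp only: inner)
  also have "\<dots> = (\<Sum>a\<in>{a\<in>{..M}. a \<le> m}. p a (m - a) * \<alpha> ^ a * cnj \<alpha> ^ (m - a))"
    by (rule sum.inter_filter[symmetric]) simp
  also have "{a\<in>{..M}. a \<le> m} = {..m}" using assms by auto
  finally show ?thesis unfolding hom_poly_def by (rule sym)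
qed

lemma DD_supp: "supp N A \<Longrightarrow> N < a \<or> N < b \<Longrightarrow> DD N A a b = 0"
  unfolding DD_def using Cc_supp by simp

lemma PP_ext:
  assumes "supp N A" "N \<le> M"
  shows "PP N A \<alpha> = (\<Sum>a\<le>M. \<Sum>b\<le>M. DD N A a b * \<alpha> ^ a * cnj \<alpha> ^ b)"
proof -
  have "PP N A \<alpha> = (\<Sum>a\<le>N. \<Sum>b\<le>M. DD N A a b * \<alpha> ^ a * cnj \<alpha> ^ b)"
    unfolding PP_def
    by (intro sum.cong refl sum.mono_neutral_left) (auto simp: DD_supp[OF assms(1)] assms(2))
  also have "\<dots> = (\<Sum>a\<le>M. \<Sum>b\<le>M. DD N A a b * \<alpha> ^ a * cnj \<alpha> ^ b)"
    by (intro sum.mono_neutral_left) (auto simp: DD_supp[OF assms(1)] assms(2))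
  finally show ?thesis .
qed

lemma DD_nz: "DD N A a b = 0 \<longleftrightarrow> Cc N A a b = 0"
  unfolding DD_def by simp

lemma E3:
  assumes "supp N A" "homog N A m"
  shows "PP N A \<alpha> = hom_poly m (DD N A) \<alpha>"
proof -
  have dd: "DD N A a b = (if a + b = m then DD N A a b else 0)" for a b
    using assms(2) DD_nz unfolding homog_def by auto
  have "PP N A \<alpha> = (\<Sum>a\<le>N + m. \<Sum>b\<le>N + m. DD N A a b * \<alpha> ^ a * cnj \<alpha> ^ b)"
    by (rule PP_ext[OF assms(1)]) simp
  also have "\<dots> = (\<Sum>a\<le>N + m. \<Sum>b\<le>N + m. (if a + b = m then DD N A a b else 0) * \<alpha> ^ a * cnj \<alpha> ^ b)"
    by (subst dd) (rule refl)
  also have "\<dots> = hom_poly m (DD N A) \<alpha>" by (rule HP[symmetric]) simp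
  finally show ?thesis .
qed

lemma E4:
  assumes "supp N A" "\<And>\<alpha>. PP N A \<alpha> = hom_poly m p \<alpha>"
  shows "homog N A m"
  unfolding homog_def
proof (intro allI impI)
  fix a b assume nz: "Cc N A a b \<noteq> 0"
  define M where "M = N + m"
  have "\<not> (N < a \<or> N < b)" using Cc_supp[OF assms(1), of a b] nz by blast
  then have ab: "a \<le> M" "b \<le> M" unfolding M_def by simp_all
  have "(\<Sum>a\<le>M. \<Sum>b\<le>M. (DD N A a b - (if a + b = m then p a b else 0)) * \<alpha> ^ a * cnj \<alpha> ^ b) = 0" for \<alpha>
  proof -
    have "PP N A \<alpha> = (\<Sum>a\<le>M. \<Sum>b\<le>M. DD N A a b * \<alpha> ^ a * cnj \<alpha> ^ b)"
      by (rule PP_ext[OF assms(1)]) (simp add: M_def)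
    moreover have "hom_poly m p \<alpha> = (\<Sum>a\<le>M. \<Sum>b\<le>M. (if a + b = m then p a b else 0) * \<alpha> ^ a * cnj \<alpha> ^ b)"
      by (rule HP) (simp add: M_def)
    ultimately have "(\<Sum>a\<le>M. \<Sum>b\<le>M. DD N A a b * \<alpha> ^ a * cnj \<alpha> ^ b) - (\<Sum>a\<le>M. \<Sum>b\<le>M. (if a + b = m then p a b else 0) * \<alpha> ^ a * cnj \<alpha> ^ b) = 0"
      using assms(2)[of \<alpha>] by simp
    then show ?thesis by (simp add: sum_subtractf left_diff_distrib)
  qed
  from L4[OF this ab] have "DD N A a b = (if a + b = m then p a b else 0)" by simp
  moreover have "DD N A a b \<noteq> 0" using nz DD_nz by blast
  ultimately show "a + b = m" by (cases "a + b = m") auto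
qed

theorem lemma10:
  fixes A :: "nat \<Rightarrow> nat \<Rightarrow> complex"
  assumes "A \<noteq> (\<lambda>j k. 0)"
    and "hermitian_op A"
    and "bounded_fock_support A"
  shows "((\<exists>t>1. is_eigenvector_vertigo t A) \<longleftrightarrow> (\<forall>t\<ge>1. is_eigenvector_vertigo t A))
       \<and> ((\<forall>t\<ge>1. is_eigenvector_vertigo t A) \<longleftrightarrow>
           (\<exists>m p. (\<forall>\<alpha>. hom_poly m p \<alpha> \<in> \<real>) \<and>
              (\<forall>\<alpha>. wigner A \<alpha> = hom_poly m p \<alpha> * complex_of_real (exp (-2 * (cmod \<alpha>)\<^sup>2)))))
       \<and> (\<forall>m p. (\<forall>\<alpha>. hom_poly m p \<alpha> \<in> \<real>) \<and>
              (\<forall>\<alpha>. wigner A \<alpha> = hom_poly m p \<alpha> * complex_of_real (exp (-2 * (cmod \<alpha>)\<^sup>2)))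
            \<longrightarrow> (\<forall>t\<ge>1. vertigo t A = (\<lambda>j k. complex_of_real (sqrt t ^ m) * A j k)))"
proof -
  define N where "N = fock_bound A"
  have s: "supp N A" unfolding N_def by (rule supp_fock[OF assms(3)])
  have wf: "\<And>\<alpha>. wigner A \<alpha> = complex_of_real (exp (-2 * (cmod \<alpha>)\<^sup>2)) * PP N A \<alpha>"
    unfolding N_def by (rule WF[OF assms(3)])
  have E1: "\<exists>m. homog N A m" if "t > 1" "is_eigenvector_vertigo t A" for t
    by (rule H2[OF s that(1) assms(1) that(2)])
  have E2: "vertigo t A = (\<lambda>j k. complex_of_real (sqrt t ^ m) * A j k)" if "homog N A m" "t \<ge> 1" for m t
    by (rule H1[OF s _ that(1)]) (use that(2) in simp)
  have E2': "\<forall>t\<ge>1. is_eigenvector_vertigo t A" if "homog N A m" for m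
    using E2[OF that] unfolding is_eigenvector_vertigo_def by blast
  have E3: "(\<forall>\<alpha>. hom_poly m (DD N A) \<alpha> \<in> \<real>) \<and>
              (\<forall>\<alpha>. wigner A \<alpha> = hom_poly m (DD N A) \<alpha> * complex_of_real (exp (-2 * (cmod \<alpha>)\<^sup>2)))"
    if "homog N A m" for m
    using E3[OF s that, symmetric] PP_real[OF assms(2)] wf by (simp add: mult.commute)
  have E4: "homog N A m"
    if "\<forall>\<alpha>. wigner A \<alpha> = hom_poly m p \<alpha> * complex_of_real (exp (-2 * (cmod \<alpha>)\<^sup>2))" for m p
  proof (rule E4[OF s])
    fix \<alpha>
    have "complex_of_real (exp (-2 * (cmod \<alpha>)\<^sup>2)) * PP N A \<alpha> = complex_of_real (exp (-2 * (cmod \<alpha>)\<^sup>2)) * hom_poly m p \<alpha>"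
      using that wf by (simp add: mult.commute)
    then show "PP N A \<alpha> = hom_poly m p \<alpha>" by simp
  qed
  have ev2: "(\<forall>t\<ge>1. is_eigenvector_vertigo t A) \<Longrightarrow> \<exists>m. homog N A m"
    using E1[of 2] by simp
  show ?thesis
  proof (intro conjI)
    show "(\<exists>t>1. is_eigenvector_vertigo t A) \<longleftrightarrow> (\<forall>t\<ge>1. is_eigenvector_vertigo t A)"
    proof
      assume "\<exists>t>1. is_eigenvector_vertigo t A"
      then obtain t where "t > 1" "is_eigenvector_vertigo t A" by blast
      then obtain m where "homog N A m" using E1 by blast
      then show "\<forall>t\<ge>1. is_eigenvector_vertigo t A" by (rule E2')
    next
      assume "\<forall>t\<ge>1. is_eigenvector_vertigo t A"
      then show "\<exists>t>1. is_eigenvector_vertigo t A" by (intro exI[of _ 2]) simp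
    qed
    show "(\<forall>t\<ge>1. is_eigenvector_vertigo t A) \<longleftrightarrow>
           (\<exists>m p. (\<forall>\<alpha>. hom_poly m p \<alpha> \<in> \<real>) \<and>
              (\<forall>\<alpha>. wigner A \<alpha> = hom_poly m p \<alpha> * complex_of_real (exp (-2 * (cmod \<alpha>)\<^sup>2))))"
    proof
      assume "\<forall>t\<ge>1. is_eigenvector_vertigo t A"
      then obtain m where "homog N A m" using ev2 by blast
      then show "\<exists>m p. (\<forall>\<alpha>. hom_poly m p \<alpha> \<in> \<real>) \<and>
              (\<forall>\<alpha>. wigner A \<alpha> = hom_poly m p \<alpha> * complex_of_real (exp (-2 * (cmod \<alpha>)\<^sup>2)))"
        using E3 by blast
    next
      assume "\<exists>m p. (\<forall>\<alpha>. hom_poly m p \<alpha> \<in> \<real>) \<and>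
              (\<forall>\<alpha>. wigner A \<alpha> = hom_poly m p \<alpha> * complex_of_real (exp (-2 * (cmod \<alpha>)\<^sup>2)))"
      then obtain m p where "\<forall>\<alpha>. wigner A \<alpha> = hom_poly m p \<alpha> * complex_of_real (exp (-2 * (cmod \<alpha>)\<^sup>2))" by blast
      then show "\<forall>t\<ge>1. is_eigenvector_vertigo t A" using E4 E2' by blast
    qed
    show "\<forall>m p. (\<forall>\<alpha>. hom_poly m p \<alpha> \<in> \<real>) \<and>
              (\<forall>\<alpha>. wigner A \<alpha> = hom_poly m p \<alpha> * complex_of_real (exp (-2 * (cmod \<alpha>)\<^sup>2)))
            \<longrightarrow> (\<forall>t\<ge>1. vertigo t A = (\<lambda>j k. complex_of_real (sqrt t ^ m) * A j k))"
      using E4 E2 by blast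
  qed
qed

end
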